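(* Let $\mathcal{M}\subset\mathbb{R}^d$ be a Riemannian manifold, let $\mathcal{Z}=\mathcal{Z}_1\times\dots\times\mathcal{Z}_s$ be a Cartesian product of finite nonempty sets, and let $\mathcal{E}$ be a finite nonempty set. Let $p_{(z,e)}$, $(z,e)\in\mathcal{Z}\times\mathcal{E}$, be non-negative scalars with $\sum_{e\in\mathcal{E}}p_{(z,e)}=1$ for each $z\in\mathcal{Z}$, and let $\{\mathbf{u}_{(z,e)}\mid(z,e)\in\mathcal{Z}\times\mathcal{E}\}\subset\mathcal{M}$ have weighted intrinsic mean $\mu$ with respect to the weights $w_{(z,e)}=p_{(z,e)}/\sum_{(z',e')}p_{(z',e')}$. For $z\in\mathcal{Z}$ put $\mathbf{v}_z=\sum_{e\in\mathcal{E}}p_{(z,e)}\mathrm{Log}_\mu(\mathbf{u}_{(z,e)})$ and $\mathbf{u}_z=\mathrm{Exp}_\mu(\mathbf{v}_z)$. Then the set $\{\mathbf{u}_z\}_{z\in\mathcal{Z}}$ has (unweighted) intrinsic mean $\mu$.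
   Context: $\mathcal{M}$ has intrinsic (geodesic) distance $d_\mathcal{M}$. For $\mu\in\mathcal{M}$, $T_\mu\mathcal{M}$ is the tangent space, $\mathrm{Exp}_\mu$ the exponential map and $\mathrm{Log}_\mu=\mathrm{Exp}_\mu^{-1}$ its (local) inverse. Given points $\mathbf{u}_1,\dots,\mathbf{u}_N\in\mathcal{M}$ and weights $w_i\ge0$ with $\sum_iw_i=1$, the weighted intrinsic mean is $\arg\min_{\mathbf{u}\in\mathcal{M}}\sum_iw_i\,d_\mathcal{M}(\mathbf{u},\mathbf{u}_i)^2$ (unweighted: $w_i=1/N$). Standing assumption of the paper: intrinsic means exist and are unique, the logarithmic map is defined at the relevant points, and a point $\mu$ is the (weighted) intrinsic mean of a set exactly when it satisfies the centering property $\sum_iw_i\,\mathrm{Log}_\mu(\mathbf{u}_i)=0$. *)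

theory Defs
  imports "HOL-Analysis.Analysis"
begin

definition weighted_intrinsic_mean ::
  "'a set \<Rightarrow> ('a \<Rightarrow> 'a \<Rightarrow> real) \<Rightarrow> 'i set \<Rightarrow> ('i \<Rightarrow> real) \<Rightarrow> ('i \<Rightarrow> 'a) \<Rightarrow> 'a \<Rightarrow> bool"
  where "weighted_intrinsic_mean M dM I w u mu \<longleftrightarrow>
     mu \<in> M \<and> (\<forall>x\<in>M. (\<Sum>i\<in>I. w i * (dM mu (u i))\<^sup>2) \<le> (\<Sum>i\<in>I. w i * (dM x (u i))\<^sup>2))"

definition intrinsic_mean ::
  "'a set \<Rightarrow> ('a \<Rightarrow> 'a \<Rightarrow> real) \<Rightarrow> 'i set \<Rightarrow> ('i \<Rightarrow> 'a) \<Rightarrow> 'a \<Rightarrow> bool"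
  where "intrinsic_mean M dM I u mu \<longleftrightarrow>
     weighted_intrinsic_mean M dM I (\<lambda>_. 1 / real (card I)) u mu"

text \<open>Standing assumption of the paper (for families indexed by the type 'i):
  a point of M is the weighted intrinsic mean of a finite nonempty weighted family in M
  exactly when it satisfies the centering property.\<close>
definition centering_characterization ::
  "'a::real_vector set \<Rightarrow> ('a \<Rightarrow> 'a \<Rightarrow> real) \<Rightarrow> ('a \<Rightarrow> 'a \<Rightarrow> 'a) \<Rightarrow> 'i itself \<Rightarrow> bool"
  where "centering_characterization M dM Log (_ :: 'i itself) \<longleftrightarrow>
     (\<forall>(I::'i set) w u mu. finite I \<longrightarrow> I \<noteq> {} \<longrightarrow> (\<forall>i\<in>I. w i \<ge> 0) \<longrightarrow>
        (\<Sum>i\<in>I. w i) = 1 \<longrightarrow> u ` I \<subseteq> M \<longrightarrow> mu \<in> M \<longrightarrow>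
        (weighted_intrinsic_mean M dM I w u mu \<longleftrightarrow> (\<Sum>i\<in>I. w i *\<^sub>R Log mu (u i)) = 0))"

end

theory Submission
  imports Defs
begin

lemma listset_fin_ne:
  assumes "\<forall>Zi\<in>set Zs. finite Zi \<and> Zi \<noteq> {}"
  shows "finite (listset Zs) \<and> listset Zs \<noteq> {}"
  using assms
proof (induction Zs)
  case Nil
  then show ?case by simp
next
  case (Cons A As)
  then have IH: "finite (listset As)" "listset As \<noteq> {}" and A: "finite A" "A \<noteq> {}" by auto
  have eq: "set_Cons A (listset As) = (\<lambda>(a,xs). a#xs) ` (A \<times> listset As)"
    unfolding set_Cons_def by auto
  show ?case using IH A unfolding listset.simps eq by auto
qed

theorem lemma2:
  fixes M :: "'a::euclidean_space set"
    and dM :: "'a \<Rightarrow> 'a \<Rightarrow> real"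
    and Exp Log :: "'a \<Rightarrow> 'a \<Rightarrow> 'a"
    and Zs :: "'c set list"
    and E :: "'e set"
    and p :: "'c list \<times> 'e \<Rightarrow> real"
    and u :: "'c list \<times> 'e \<Rightarrow> 'a"
    and mu :: 'a
  defines "Z \<equiv> listset Zs"
  defines "w \<equiv> (\<lambda>ze. p ze / (\<Sum>ze'\<in>Z \<times> E. p ze'))"
  defines "v \<equiv> (\<lambda>z. \<Sum>e\<in>E. p (z, e) *\<^sub>R Log mu (u (z, e)))"
  defines "uz \<equiv> (\<lambda>z. Exp mu (v z))"
  assumes std1: "centering_characterization M dM Log TYPE('c list \<times> 'e)"
    and std2: "centering_characterization M dM Log TYPE('c list)"
    and Zs_fin: "\<forall>Zi\<in>set Zs. finite Zi \<and> Zi \<noteq> {}"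
    and E_fin: "finite E" and E_ne: "E \<noteq> {}"
    and p_nonneg: "\<forall>z\<in>Z. \<forall>e\<in>E. p (z, e) \<ge> 0"
    and p_sum: "\<forall>z\<in>Z. (\<Sum>e\<in>E. p (z, e)) = 1"
    and u_in: "\<forall>z\<in>Z. \<forall>e\<in>E. u (z, e) \<in> M"
    and mean: "weighted_intrinsic_mean M dM (Z \<times> E) w u mu"
    and Exp_in: "\<forall>z\<in>Z. uz z \<in> M"
    and Log_Exp: "\<forall>z\<in>Z. Log mu (Exp mu (v z)) = v z"
  shows "intrinsic_mean M dM Z uz mu"
proof -
  have ZZ: "finite Z \<and> Z \<noteq> {}" unfolding Z_def using listset_fin_ne[OF Zs_fin] .
  hence Zf: "finite Z" and Zne: "Z \<noteq> {}" by auto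
  have S: "(\<Sum>ze'\<in>Z \<times> E. p ze') = real (card Z)"
  proof -
    have "(\<Sum>ze'\<in>Z \<times> E. p ze') = (\<Sum>z\<in>Z. \<Sum>e\<in>E. p (z, e))"
      by (simp add: sum.cartesian_product split_def)
    also have "\<dots> = (\<Sum>z\<in>Z. 1)" using p_sum by (intro sum.cong) auto
    finally show ?thesis by simp
  qed
  have N: "real (card Z) > 0" using Zf Zne by (simp add: card_gt_0_iff)
  have mu_in: "mu \<in> M" using mean unfolding weighted_intrinsic_mean_def by blast
  have wsum: "(\<Sum>i\<in>Z \<times> E. w i) = 1"
    unfolding w_def using N by (simp add: sum_divide_distrib[symmetric] S)
  have wnn: "\<forall>i\<in>Z \<times> E. w i \<ge> 0" unfolding w_def S using p_nonneg by auto
  have uin: "u ` (Z \<times> E) \<subseteq> M" using u_in by auto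
  have c1: "(\<Sum>i\<in>Z \<times> E. w i *\<^sub>R Log mu (u i)) = 0"
  proof -
    have fin: "finite (Z \<times> E)" using Zf E_fin by simp
    have ne: "Z \<times> E \<noteq> {}" using Zne E_ne by simp
    show ?thesis
      using std1[unfolded centering_characterization_def, rule_format, OF fin ne _ wsum uin mu_in] wnn mean
      by simp
  qed
  have "(\<Sum>i\<in>Z \<times> E. w i *\<^sub>R Log mu (u i)) = (1 / real (card Z)) *\<^sub>R (\<Sum>z\<in>Z. v z)"
    unfolding w_def S v_def
    by (simp add: sum.cartesian_product split_def scaleR_sum_right divide_inverse mult.commute)
  with c1 N have vs: "(\<Sum>z\<in>Z. v z) = 0" by simp
  have c2: "(\<Sum>z\<in>Z. (1 / real (card Z)) *\<^sub>R Log mu (uz z)) = 0"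
  proof -
    have "(\<Sum>z\<in>Z. (1 / real (card Z)) *\<^sub>R Log mu (uz z)) = (1 / real (card Z)) *\<^sub>R (\<Sum>z\<in>Z. v z)"
      unfolding scaleR_sum_right uz_def using Log_Exp by (intro sum.cong) auto
    then show ?thesis using vs by simp
  qed
  have wsum2: "(\<Sum>z\<in>Z. 1 / real (card Z)) = 1" using N by simp
  have "weighted_intrinsic_mean M dM Z (\<lambda>_. 1 / real (card Z)) uz mu"
    using std2 unfolding centering_characterization_def
    using Zf Zne wsum2 Exp_in mu_in c2 by (auto simp: image_subset_iff)
  then show ?thesis unfolding intrinsic_mean_def .
qed

end
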